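(* Let $N\ge 2$, $P=2$, $L=N+1$. For $\mathbf{b}=[b_1,\dots,b_N]^T\in\{\pm1\}^N$ let $\mathbf{B}$ be the $L\times 2$ matrix whose first column is $[b_1,\dots,b_N,0]^T$ and whose second column is $[0,b_1,\dots,b_N]^T$, so that $$\mathbf{B}^T\mathbf{B}=\begin{bmatrix}N & \sum_{i=1}^{N-1}b_ib_{i+1}\\ \sum_{i=1}^{N-1}b_ib_{i+1} & N\end{bmatrix}.$$ For a $2\times2$ matrix $\mathbf{G}$ and a prefix $\mathbf{b}_{(\ell)}=[b_1,\dots,b_\ell]\in\{\pm1\}^\ell$ ($1\le\ell\le N$), let $\mathcal{A}(\mathbf{b}_{(\ell)}\mid\mathbf{G})$ denote the set of all $\mathbf{b}'\in\{\pm1\}^N$ whose first $\ell$ entries equal $b_1,\dots,b_\ell$ and whose associated matrix $\mathbf{B}'$ satisfies $\mathbf{B}'^T\mathbf{B}'=\mathbf{G}$. Let $m_\ell=(b_1b_2+\cdots+b_{\ell-1}b_\ell)\cdot\mathbf{1}\{\ell>1\}$ (so $m_1=0$), where $\mathbf{1}\{\cdot\}$ is the indicator function. (i) If $N$ is odd and $\mathbf{G}=N\mathbf{I}_2$, then for $1\le\ell\le N$, $$|\mathcal{A}(\mathbf{b}_{(\ell)}\mid\mathbf{G})|=\binom{N-\ell}{(N-\ell-m_\ell)/2}\,\mathbf{1}\{|m_\ell|\le N-\ell\}.$$ (ii) If $N$ is even, and $\mathbf{G}_1=\begin{bmatrix}N&-1\\-1&N\end{bmatrix}$, $\mathbf{G}_2=\begin{bmatrix}N&1\\1&N\end{bmatrix}$,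 then for $\theta\in\{1,2\}$ and $1\le\ell\le N$, $$|\mathcal{A}(\mathbf{b}_{(\ell)}\mid\mathbf{G}_\theta)|=\binom{N-\ell}{(N-\ell+(-1)^\theta-m_\ell)/2}\,\mathbf{1}\{|(-1)^\theta-m_\ell|\le N-\ell\}.$$ Here $\binom{0}{0}=1$, and the right-hand sides are understood to be $0$ whenever the indicator is $0$.
   Context: $\mathbf{I}_2$ is the $2\times 2$ identity matrix. This is the setting of binary $\pm1$ codewords transmitted over a channel of memory order one, where $\mathbf{B}$ is the convolution (Toeplitz) matrix of the codeword. *)

theory Defs
  imports "Jordan_Normal_Form.Matrix"
begin

text \<open>Codewords are int lists of length N with entries in {-1,1}; indices are 0-based,
  so list entry b!i is b_(i+1) of the paper.\<close>

definition pm1_words :: "nat \<Rightarrow> int list set" where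
  "pm1_words N = {b. length b = N \<and> set b \<subseteq> {-1, 1}}"

definition conv_mat :: "int list \<Rightarrow> int mat" where
  "conv_mat b = mat (length b + 1) 2
     (\<lambda>(i, j). if j = 0 then (if i < length b then b ! i else 0)
               else (if i = 0 then 0 else b ! (i - 1)))"

definition compat_set :: "nat \<Rightarrow> int list \<Rightarrow> int mat \<Rightarrow> int list set" where
  "compat_set N p G =
     {b' \<in> pm1_words N. take (length p) b' = p \<and> transpose_mat (conv_mat b') * conv_mat b' = G}"

definition m_val :: "int list \<Rightarrow> int" where
  "m_val p = (if length p > 1 then (\<Sum>i<length p - 1. p ! i * p ! (i + 1)) else 0)"

definition G_theta :: "nat \<Rightarrow> nat \<Rightarrow> int mat" where
  "G_theta N \<theta> = mat 2 2 (\<lambda>(i, j). if i = j then int N else (-1) ^ \<theta>)"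

end

theory Submission
  imports Defs
begin

fun cr :: "int list \<Rightarrow> int" where
  "cr (x # y # q) = x * y + cr (y # q)"
| "cr _ = 0"

definition F :: "nat \<Rightarrow> int \<Rightarrow> nat" where
  "F k s = (if \<bar>s\<bar> \<le> int k \<and> even (int k + s) then k choose nat ((int k + s) div 2) else 0)"

lemma F_Suc: "F (Suc k) s = F k (s - 1) + F k (s + 1)"
proof (cases "even (int k + 1 + s) \<and> \<bar>s\<bar> \<le> int k + 1")
  case False
  have h1: "\<not> (\<bar>s\<bar> \<le> int (Suc k) \<and> even (int (Suc k) + s))" using False by presburger
  have h2: "\<not> (\<bar>s - 1\<bar> \<le> int k \<and> even (int k + (s - 1)))" using False by presburger
  have h3: "\<not> (\<bar>s + 1\<bar> \<le> int k \<and> even (int k + (s + 1)))" using False by presburger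
  have "F (Suc k) s = 0" unfolding F_def by (rule if_not_P[OF h1])
  moreover have "F k (s - 1) = 0" unfolding F_def by (rule if_not_P[OF h2])
  moreover have "F k (s + 1) = 0" unfolding F_def by (rule if_not_P[OF h3])
  ultimately show ?thesis by simp
next
  case True
  define j where "j = nat ((int k + 1 + s) div 2)"
  have j: "int k + 1 + s = 2 * int j" "j \<le> k + 1"
    using True unfolding j_def by (auto elim!: evenE)
  have s: "s = 2 * int j - int k - 1" using j by simp
  have L: "F (Suc k) s = Suc k choose j" unfolding F_def s by auto
  show ?thesis
  proof (cases j)
    case 0
    then show ?thesis unfolding L F_def s by auto
  next
    case (Suc j')
    have A: "F k (s - 1) = k choose j'" unfolding F_def s using j Suc by auto
    have n: "nat (1 + int j') = Suc j'" by simp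
    have B: "F k (s + 1) = k choose j" unfolding F_def s using j Suc n by auto
    show ?thesis using L A B Suc by simp
  qed
qed

lemma count:
  "x \<in> {-1,1} \<Longrightarrow> card {q. length q = k \<and> set q \<subseteq> {-1,1} \<and> cr (x # q) = s} = F k s"
proof (induction k arbitrary: x s)
  case 0
  have "{q. length q = 0 \<and> set q \<subseteq> {-1,1} \<and> cr (x # q) = s} = (if s = 0 then {[]} else {})"
    by auto
  then show ?case unfolding F_def by auto
next
  case (Suc k)
  define A where "A = (\<lambda>y t. {q. length q = k \<and> set q \<subseteq> {-1::int,1} \<and> cr (y # q) = t})"
  have fin: "finite (A y t)" for y t
    by (rule finite_subset[OF _ finite_lists_length_eq[of "{-1::int,1}" k]]) (auto simp: A_def)
  have eq: "{q. length q = Suc k \<and> set q \<subseteq> {-1,1} \<and> cr (x # q) = s}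
      = Cons 1 ` A 1 (s - x) \<union> Cons (-1) ` A (-1) (s + x)"
  proof (rule equalityI; rule subsetI)
    fix q assume q: "q \<in> {q. length q = Suc k \<and> set q \<subseteq> {-1,1} \<and> cr (x # q) = s}"
    then obtain y q' where "q = y # q'" by (cases q) auto
    with q show "q \<in> Cons 1 ` A 1 (s - x) \<union> Cons (-1) ` A (-1) (s + x)"
      by (auto simp: A_def)
  qed (auto simp: A_def)
  have "card (Cons 1 ` A 1 (s - x) \<union> Cons (-1) ` A (-1) (s + x))
      = card (A 1 (s - x)) + card (A (-1) (s + x))"
    by (subst card_Un_disjoint) (auto simp: fin card_image)
  also have "\<dots> = F k (s - x) + F k (s + x)" using Suc.IH[of 1] Suc.IH[of "-1"] by (simp add: A_def)
  also have "\<dots> = F (Suc k) s" using Suc.prems F_Suc[of k s] by auto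
  finally show ?case using eq by simp
qed

lemma cr_sum: "cr b = (\<Sum>i<length b - 1. b ! i * b ! (i + 1))"
  by (induction b rule: cr.induct) (simp_all add: sum.lessThan_Suc_shift del: sum.lessThan_Suc)

lemma m_val_cr: "m_val p = cr p"
  unfolding m_val_def cr_sum by auto

lemma cr_append: "p \<noteq> [] \<Longrightarrow> cr (p @ q) = cr p + cr (last p # q)"
  by (induction p rule: cr.induct) auto

lemma cr_parity: "p \<noteq> [] \<Longrightarrow> set p \<subseteq> {-1,1} \<Longrightarrow> even (cr p + int (length p) + 1)"
proof (induction p rule: cr.induct)
  case (1 x y q)
  then have "odd (x * y)" by auto
  with 1 show ?case by auto
qed auto

lemma gram_entry:
  "i < dim_col A \<Longrightarrow> j < dim_col A \<Longrightarrow>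
   (transpose_mat A * A) $$ (i, j) = (\<Sum>r\<in>{0..<dim_row A}. A $$ (r, i) * A $$ (r, j))"
  by (simp add: scalar_prod_def)

lemma gram:
  assumes b: "set b \<subseteq> {-1,1}" and N: "length b = N" "N \<ge> 1"
  shows "transpose_mat (conv_mat b) * conv_mat b = mat 2 2 (\<lambda>(i, j). if i = j then int N else cr b)"
proof -
  have sq: "b ! r * b ! r = 1" if "r < N" for r
  proof -
    have "b ! r \<in> {-1,1}" using b that N nth_mem by blast
    then show ?thesis by auto
  qed
  obtain M where M: "N = Suc M" using N by (cases N) auto
  have cb: "cr b = (\<Sum>i<M. b ! i * b ! (i + 1))" using cr_sum[of b] N M by simp
  have e00: "(\<Sum>r\<in>{0..<N+1}. (if r < N then b ! r else 0) * (if r < N then b ! r else 0)) = int N"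
    using sq by (simp add: atLeast0LessThan)
  have e11: "(\<Sum>r\<in>{0..<N+1}. (if r = 0 then 0 else b ! (r - 1)) * (if r = 0 then 0 else b ! (r - 1))) = int N"
    using sq by (simp add: atLeast0LessThan sum.lessThan_Suc_shift del: sum.lessThan_Suc)
  have e01: "(\<Sum>r\<in>{0..<N+1}. (if r < N then b ! r else 0) * (if r = 0 then 0 else b ! (r - 1))) = cr b"
  proof -
    have "(\<Sum>r\<in>{0..<N+1}. (if r < N then b ! r else 0) * (if r = 0 then 0 else b ! (r - 1)))
       = (\<Sum>i<Suc M. (if Suc i < N then b ! Suc i else 0) * b ! i)"
      by (simp add: atLeast0LessThan sum.lessThan_Suc_shift M del: sum.lessThan_Suc)
    also have "\<dots> = (\<Sum>i<M. (if Suc i < N then b ! Suc i else 0) * b ! i)"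
      by (simp add: M)
    also have "\<dots> = (\<Sum>i<M. b ! i * b ! (i + 1))"
      by (rule sum.cong) (auto simp: M)
    finally show ?thesis using cb by simp
  qed
  have e10: "(\<Sum>r\<in>{0..<N+1}. (if r = 0 then 0 else b ! (r - 1)) * (if r < N then b ! r else 0)) = cr b"
    using e01 by (simp add: mult.commute)
  define E where "E = (\<lambda>r c. if c = (0::nat) then (if r < N then b ! r else 0) else (if r = 0 then 0 else b ! (r - 1)))"
  have dr: "dim_row (conv_mat b) = N + 1" and dc: "dim_col (conv_mat b) = 2"
    by (auto simp: conv_mat_def N)
  have ce: "conv_mat b $$ (r, c) = E r c" if "r < N + 1" "c < 2" for r c
    using that by (simp add: conv_mat_def E_def N)
  have entry: "(transpose_mat (conv_mat b) * conv_mat b) $$ (i, j) = (\<Sum>r\<in>{0..<N+1}. E r i * E r j)"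
    if "i < 2" "j < 2" for i j
  proof -
    have "(transpose_mat (conv_mat b) * conv_mat b) $$ (i, j)
        = (\<Sum>r\<in>{0..<dim_row (conv_mat b)}. conv_mat b $$ (r, i) * conv_mat b $$ (r, j))"
      by (rule gram_entry) (use that dc in auto)
    also have "\<dots> = (\<Sum>r\<in>{0..<N+1}. E r i * E r j)"
      unfolding dr by (rule sum.cong) (use that ce in auto)
    finally show ?thesis .
  qed
  show ?thesis
  proof (rule eq_matI)
    fix i j assume ij: "i < dim_row (mat 2 2 (\<lambda>(i, j). if i = j then int N else cr b))"
      "j < dim_col (mat 2 2 (\<lambda>(i, j). if i = j then int N else cr b))"
    then have "i < 2" "j < 2" by auto
    then have "(i = 0 \<or> i = 1) \<and> (j = 0 \<or> j = 1)" by auto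
    then show "(transpose_mat (conv_mat b) * conv_mat b) $$ (i, j) = mat 2 2 (\<lambda>(i, j). if i = j then int N else cr b) $$ (i, j)"
      using e00 e11 e01 e10 entry[OF \<open>i < 2\<close> \<open>j < 2\<close>]
      by (auto simp: E_def)
  qed (auto simp: dr dc)
qed


definition Gm :: "nat \<Rightarrow> int \<Rightarrow> int mat" where
  "Gm N c = mat 2 2 (\<lambda>(i, j). if i = j then int N else c)"

lemma Gm_inj: "Gm N c = Gm N d \<Longrightarrow> c = d"
proof -
  assume "Gm N c = Gm N d"
  then have "Gm N c $$ (0, 1) = Gm N d $$ (0, 1)" by simp
  then show "c = d" by (simp add: Gm_def)
qed

lemma main_count:
  assumes N: "N \<ge> 1" and p: "p \<in> pm1_words (length p)" and l: "1 \<le> length p" "length p \<le> N"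
  shows "card (compat_set N p (Gm N c)) = F (N - length p) (c - m_val p)"
proof -
  let ?k = "N - length p"
  let ?Q = "{q. length q = ?k \<and> set q \<subseteq> {-1,1} \<and> cr (last p # q) = c - m_val p}"
  have pne: "p \<noteq> []" using l by auto
  have ps: "set p \<subseteq> {-1,1}" using p by (simp add: pm1_words_def)
  have eq: "compat_set N p (Gm N c) = (\<lambda>q. p @ q) ` ?Q"
  proof (rule equalityI; rule subsetI)
    fix b assume "b \<in> compat_set N p (Gm N c)"
    then have b: "length b = N" "set b \<subseteq> {-1,1}" "take (length p) b = p"
      "transpose_mat (conv_mat b) * conv_mat b = Gm N c"
      by (auto simp: compat_set_def pm1_words_def)
    have "Gm N (cr b) = Gm N c" using gram[OF b(2) b(1) N] b(4) by (simp add: Gm_def)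
    then have crb: "cr b = c" by (rule Gm_inj)
    have bq: "b = p @ drop (length p) b" using b(3) by (metis append_take_drop_id)
    have "cr b = cr p + cr (last p # drop (length p) b)"
      by (subst bq, rule cr_append[OF pne])
    moreover have "set (drop (length p) b) \<subseteq> {-1,1}" using b(2) by (meson order_trans set_drop_subset)
    ultimately show "b \<in> (\<lambda>q. p @ q) ` ?Q"
      using crb b(1) bq m_val_cr[of p] by (intro image_eqI[where x="drop (length p) b"]) auto
  next
    fix b assume "b \<in> (\<lambda>q. p @ q) ` ?Q"
    then obtain q where q: "b = p @ q" "length q = ?k" "set q \<subseteq> {-1,1}" "cr (last p # q) = c - m_val p"
      by auto
    have lb: "length b = N" using q l by simp
    have sb: "set b \<subseteq> {-1,1}" using q ps by auto
    have "cr b = c" using q cr_append[OF pne, of q] m_val_cr[of p] by simp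
    then show "b \<in> compat_set N p (Gm N c)"
      using gram[OF sb lb N] lb sb q unfolding compat_set_def pm1_words_def Gm_def by auto
  qed
  have "card (compat_set N p (Gm N c)) = card ?Q"
    unfolding eq by (rule card_image) (auto simp: inj_on_def)
  also have "\<dots> = F ?k (c - m_val p)"
    by (rule count) (use ps pne last_in_set in blast)
  finally show ?thesis .
qed

theorem lemma2:
  fixes N :: nat and p :: "int list"
  assumes "N \<ge> 2"
    and "p \<in> pm1_words (length p)"
    and "1 \<le> length p" and "length p \<le> N"
  shows "(odd N \<longrightarrow>
            int (card (compat_set N p (int N \<cdot>\<^sub>m 1\<^sub>m 2))) =
              (if \<bar>m_val p\<bar> \<le> int (N - length p)
               then int ((N - length p) choose nat ((int (N - length p) - m_val p) div 2))
               else 0))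
       \<and> (even N \<longrightarrow> (\<forall>\<theta>\<in>{1, 2}.
            int (card (compat_set N p (G_theta N \<theta>))) =
              (if \<bar>(-1) ^ \<theta> - m_val p\<bar> \<le> int (N - length p)
               then int ((N - length p) choose
                          nat ((int (N - length p) + (-1) ^ \<theta> - m_val p) div 2))
               else 0)))"
proof -
  let ?l = "length p" and ?k = "N - length p"
  have N1: "N \<ge> 1" using assms by simp
  have ps: "set p \<subseteq> {-1,1}" using assms(2) by (simp add: pm1_words_def)
  have pne: "p \<noteq> []" using assms(3) by auto
  have par: "even (m_val p + int ?l + 1)" using cr_parity[OF pne ps] m_val_cr[of p] by simp
  have ik: "int ?k = int N - int ?l" using assms(4) by simp
  show ?thesis
  proof (intro conjI impI ballI)
    assume oN: "odd N"
    have G: "int N \<cdot>\<^sub>m 1\<^sub>m 2 = Gm N 0" by (rule eq_matI) (auto simp: Gm_def)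
    have ev: "even (int ?k + (0 - m_val p))" using oN par ik by presburger
    show "int (card (compat_set N p (int N \<cdot>\<^sub>m 1\<^sub>m 2))) =
              (if \<bar>m_val p\<bar> \<le> int (N - length p)
               then int ((N - length p) choose nat ((int (N - length p) - m_val p) div 2))
               else 0)"
      unfolding G main_count[OF N1 assms(2-4)] F_def using ev by simp
  next
    fix \<theta> :: nat assume eN: "even N" and th: "\<theta> \<in> {1, 2}"
    have G: "G_theta N \<theta> = Gm N ((-1) ^ \<theta>)" by (simp add: G_theta_def Gm_def)
    have odd1: "odd ((-1::int) ^ \<theta>)" using th by auto
    have "\<forall>t::int. odd t \<longrightarrow> even (int ?k + (t - m_val p))" using eN par ik by presburger
    then have ev: "even (int ?k + ((-1) ^ \<theta> - m_val p))" using odd1 by blast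
    show "int (card (compat_set N p (G_theta N \<theta>))) =
              (if \<bar>(-1) ^ \<theta> - m_val p\<bar> \<le> int (N - length p)
               then int ((N - length p) choose
                          nat ((int (N - length p) + (-1) ^ \<theta> - m_val p) div 2))
               else 0)"
      unfolding G main_count[OF N1 assms(2-4)] F_def using ev by (simp add: add_diff_eq)
  qed
qed

end
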